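(* Let $\mathbf{K}$ be a Kan complex in pointed simplicial sets which is an $H$-group, and let $\bar m:F\mathbf{K}\to\mathbf{K}$ be the associated retraction. Suppose that $$(\ast)\qquad f\star\big((g\star h)\circ j_B\big)=(g\circ f)\star h$$ for all pointed simplicial sets $\mathbf{A},\mathbf{B},\mathbf{C}$, all homomorphisms of simplicial groups $f:F\mathbf{A}\to F\mathbf{B}$ and $g:F\mathbf{B}\to F\mathbf{C}$, and all pointed simplicial maps $h:\mathbf{C}\to\mathbf{K}$. Then $\mathbf{K}$ is $H$-homotopy equivalent to a simplicial group (and thus $|\mathbf{K}|$ is equivalent to a loop space). Conversely, if $\mathbf{K}$ is a simplicial group (with its group multiplication as $H$-structure and $\bar m$ the homomorphism $F\mathbf{K}\to\mathbf{K}$ extending the identity), then $(\ast)$ holds.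
   Context: $F$ denotes Milnor's free simplicial group functor from pointed simplicial sets to simplicial groups: $(F\mathbf{K})_n$ is the free group on $\mathbf{K}_n$ with the basepoint identified with the unit; $j_K:\mathbf{K}\to F\mathbf{K}$ is the inclusion of generators. An $H$-group structure on $\mathbf{K}$ is a simplicial map $m:\mathbf{K}\times\mathbf{K}\to\mathbf{K}$ restricting to the fold map on $\mathbf{K}\vee\mathbf{K}$, homotopy-associative and with a two-sided homotopy inverse. The retraction $\bar m:F\mathbf{K}\to\mathbf{K}$ (with $\bar m\circ j_K=\mathrm{id}$) is defined by iterated multiplication, $\bar m(x_1x_2\cdots x_n)=m(\cdots m(m(x_1,x_2),x_3),\dots,x_n)$ (analogue of the James-construction retraction). For a homomorphism of simplicial groups $f:F\mathbf{A}\to F\mathbf{B}$ and a pointed simplicial map $g:\mathbf{B}\to\mathbf{K}$, define $f\star g:=\bar m\circ Fg\circ f:F\mathbf{A}\to\mathbf{K}$. An $H$-homotopy equivalence is a homotopy equivalence which is an $H$-map (compatible with multiplications up to homotopy). *)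

theory Defs
  imports "HOL-Algebra.Group"
begin

text \<open>cells X n is the set of n-simplices; face X n i : X_n -> X_(n-1) (i <= n);
  degen X n i : X_n -> X_(n+1) (i <= n); base X is the base vertex in X_0.\<close>

record 'a psset =
  cells :: "nat \<Rightarrow> 'a set"
  face  :: "nat \<Rightarrow> nat \<Rightarrow> 'a \<Rightarrow> 'a"
  degen :: "nat \<Rightarrow> nat \<Rightarrow> 'a \<Rightarrow> 'a"
  base  :: 'a

primrec bpt :: "('a, 'm) psset_scheme \<Rightarrow> nat \<Rightarrow> 'a" where
  "bpt X 0 = base X"
| "bpt X (Suc n) = degen X n 0 (bpt X n)"

definition pssset :: "('a, 'm) psset_scheme \<Rightarrow> bool" where
  "pssset X \<longleftrightarrow>
     base X \<in> cells X 0 \<and>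
     (\<forall>n i x. x \<in> cells X (Suc n) \<and> i \<le> Suc n \<longrightarrow> face X (Suc n) i x \<in> cells X n) \<and>
     (\<forall>n i x. x \<in> cells X n \<and> i \<le> n \<longrightarrow> degen X n i x \<in> cells X (Suc n)) \<and>
     (\<forall>n i j x. x \<in> cells X (Suc (Suc n)) \<and> i < j \<and> j \<le> Suc (Suc n) \<longrightarrow>
        face X (Suc n) i (face X (Suc (Suc n)) j x) = face X (Suc n) (j - 1) (face X (Suc (Suc n)) i x)) \<and>
     (\<forall>n i j x. x \<in> cells X n \<and> i \<le> j \<and> j \<le> n \<longrightarrow>
        degen X (Suc n) i (degen X n j x) = degen X (Suc n) (Suc j) (degen X n i x)) \<and>
     (\<forall>n i j x. x \<in> cells X n \<and> i < j \<and> j \<le> n \<longrightarrow>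
        face X (Suc n) i (degen X n j x) = degen X (n - 1) (j - 1) (face X n i x)) \<and>
     (\<forall>n j x. x \<in> cells X n \<and> j \<le> n \<longrightarrow>
        face X (Suc n) j (degen X n j x) = x \<and> face X (Suc n) (Suc j) (degen X n j x) = x) \<and>
     (\<forall>n i j x. x \<in> cells X n \<and> Suc j < i \<and> i \<le> Suc n \<longrightarrow>
        face X (Suc n) i (degen X n j x) = degen X (n - 1) j (face X n (i - 1) x))"

text \<open>Kan condition: every horn Lambda^(n+1)_k can be filled.\<close>
definition kan :: "('a, 'm) psset_scheme \<Rightarrow> bool" where
  "kan X \<longleftrightarrow>
     (\<forall>n k xs. k \<le> Suc n \<and> (\<forall>i \<le> Suc n. i \<noteq> k \<longrightarrow> xs i \<in> cells X n) \<and>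
        (0 < n \<longrightarrow> (\<forall>i j. i < j \<and> j \<le> Suc n \<and> i \<noteq> k \<and> j \<noteq> k \<longrightarrow>
            face X n i (xs j) = face X n (j - 1) (xs i)))
      \<longrightarrow> (\<exists>y \<in> cells X (Suc n). \<forall>i \<le> Suc n. i \<noteq> k \<longrightarrow> face X (Suc n) i y = xs i))"

definition psmap :: "('a, 'm) psset_scheme \<Rightarrow> ('b, 'n) psset_scheme \<Rightarrow> (nat \<Rightarrow> 'a \<Rightarrow> 'b) \<Rightarrow> bool" where
  "psmap X Y f \<longleftrightarrow>
     (\<forall>n x. x \<in> cells X n \<longrightarrow> f n x \<in> cells Y n) \<and>
     (\<forall>n i x. x \<in> cells X (Suc n) \<and> i \<le> Suc n \<longrightarrow>
        f n (face X (Suc n) i x) = face Y (Suc n) i (f (Suc n) x)) \<and>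
     (\<forall>n i x. x \<in> cells X n \<and> i \<le> n \<longrightarrow>
        f (Suc n) (degen X n i x) = degen Y n i (f n x)) \<and>
     f 0 (base X) = base Y"

definition sprod :: "('a, 'm) psset_scheme \<Rightarrow> ('b, 'n) psset_scheme \<Rightarrow> ('a \<times> 'b) psset" where
  "sprod X Y = \<lparr> cells = (\<lambda>n. cells X n \<times> cells Y n),
                 face = (\<lambda>n i (x, y). (face X n i x, face Y n i y)),
                 degen = (\<lambda>n i (x, y). (degen X n i x, degen Y n i y)),
                 base = (base X, base Y) \<rparr>"

text \<open>Pointed simplicial homotopy in the combinatorial form (May, Def. 5.1):
  H q j : X_q -> Y_(q+1), 0 <= j <= q.\<close>
definition shtpy :: "('a, 'm) psset_scheme \<Rightarrow> ('b, 'n) psset_scheme \<Rightarrow>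
    (nat \<Rightarrow> 'a \<Rightarrow> 'b) \<Rightarrow> (nat \<Rightarrow> 'a \<Rightarrow> 'b) \<Rightarrow> (nat \<Rightarrow> nat \<Rightarrow> 'a \<Rightarrow> 'b) \<Rightarrow> bool" where
  "shtpy X Y f g H \<longleftrightarrow>
     (\<forall>q j x. x \<in> cells X q \<and> j \<le> q \<longrightarrow> H q j x \<in> cells Y (Suc q)) \<and>
     (\<forall>q x. x \<in> cells X q \<longrightarrow>
        face Y (Suc q) 0 (H q 0 x) = f q x \<and> face Y (Suc q) (Suc q) (H q q x) = g q x) \<and>
     (\<forall>q i j x. x \<in> cells X q \<and> i < j \<and> j \<le> q \<longrightarrow>
        face Y (Suc q) i (H q j x) = H (q - 1) (j - 1) (face X q i x)) \<and>
     (\<forall>q j x. x \<in> cells X q \<and> Suc j \<le> q \<longrightarrow>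
        face Y (Suc q) (Suc j) (H q (Suc j) x) = face Y (Suc q) (Suc j) (H q j x)) \<and>
     (\<forall>q i j x. x \<in> cells X q \<and> j \<le> q \<and> Suc j < i \<and> i \<le> Suc q \<longrightarrow>
        face Y (Suc q) i (H q j x) = H (q - 1) j (face X q (i - 1) x)) \<and>
     (\<forall>q i j x. x \<in> cells X q \<and> i \<le> j \<and> j \<le> q \<longrightarrow>
        degen Y (Suc q) i (H q j x) = H (Suc q) (Suc j) (degen X q i x)) \<and>
     (\<forall>q i j x. x \<in> cells X q \<and> j < i \<and> i \<le> Suc q \<longrightarrow>
        degen Y (Suc q) i (H q j x) = H (Suc q) j (degen X q (i - 1) x)) \<and>
     (\<forall>q j. j \<le> q \<longrightarrow> H q j (bpt X q) = bpt Y (Suc q))"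

definition homotopic :: "('a, 'm) psset_scheme \<Rightarrow> ('b, 'n) psset_scheme \<Rightarrow>
    (nat \<Rightarrow> 'a \<Rightarrow> 'b) \<Rightarrow> (nat \<Rightarrow> 'a \<Rightarrow> 'b) \<Rightarrow> bool" where
  "homotopic X Y f g \<longleftrightarrow> (\<exists>H. shtpy X Y f g H)"

definition hgroup :: "('a, 'm) psset_scheme \<Rightarrow> (nat \<Rightarrow> 'a \<times> 'a \<Rightarrow> 'a) \<Rightarrow> (nat \<Rightarrow> 'a \<Rightarrow> 'a) \<Rightarrow> bool" where
  "hgroup K m \<nu> \<longleftrightarrow>
     pssset K \<and> psmap (sprod K K) K m \<and> psmap K K \<nu> \<and>
     (\<forall>n x. x \<in> cells K n \<longrightarrow> m n (x, bpt K n) = x \<and> m n (bpt K n, x) = x) \<and>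
     homotopic (sprod (sprod K K) K) K
        (\<lambda>n ((x, y), z). m n (m n (x, y), z)) (\<lambda>n ((x, y), z). m n (x, m n (y, z))) \<and>
     homotopic K K (\<lambda>n x. m n (x, \<nu> n x)) (\<lambda>n x. bpt K n) \<and>
     homotopic K K (\<lambda>n x. m n (\<nu> n x, x)) (\<lambda>n x. bpt K n)"

record 'a sgrp = "'a psset" +
  gmul :: "nat \<Rightarrow> 'a \<Rightarrow> 'a \<Rightarrow> 'a"
  gone :: "nat \<Rightarrow> 'a"

definition grp_of :: "('a, 'm) sgrp_scheme \<Rightarrow> nat \<Rightarrow> 'a monoid" where
  "grp_of G n = \<lparr> carrier = cells G n, mult = gmul G n, one = gone G n \<rparr>"

definition sgroup :: "('a, 'm) sgrp_scheme \<Rightarrow> bool" where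
  "sgroup G \<longleftrightarrow> pssset G \<and> base G = gone G 0 \<and>
     (\<forall>n. group (grp_of G n)) \<and>
     (\<forall>n i. i \<le> Suc n \<longrightarrow> face G (Suc n) i \<in> hom (grp_of G (Suc n)) (grp_of G n)) \<and>
     (\<forall>n i. i \<le> n \<longrightarrow> degen G n i \<in> hom (grp_of G n) (grp_of G (Suc n)))"

definition sghom :: "('a, 'm) sgrp_scheme \<Rightarrow> ('b, 'n) sgrp_scheme \<Rightarrow> (nat \<Rightarrow> 'a \<Rightarrow> 'b) \<Rightarrow> bool" where
  "sghom G H f \<longleftrightarrow> psmap G H f \<and> (\<forall>n. f n \<in> hom (grp_of G n) (grp_of H n))"

section \<open>Milnor's free simplicial group F K (reduced words)\<close>

text \<open>A letter (x, e) stands for x if e = False and for x^-1 if e = True.\<close>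

definition cancel_cons :: "'a \<times> bool \<Rightarrow> ('a \<times> bool) list \<Rightarrow> ('a \<times> bool) list" where
  "cancel_cons a ws = (case ws of [] \<Rightarrow> [a]
      | c # cs \<Rightarrow> (if fst c = fst a \<and> snd c \<noteq> snd a then cs else a # ws))"

definition reduce :: "('a \<times> bool) list \<Rightarrow> ('a \<times> bool) list" where
  "reduce ws = foldr cancel_cons ws []"

definition reduced :: "('a \<times> bool) list \<Rightarrow> bool" where
  "reduced ws \<longleftrightarrow> (\<forall>i. Suc i < length ws \<longrightarrow>
      \<not> (fst (ws ! i) = fst (ws ! Suc i) \<and> snd (ws ! i) \<noteq> snd (ws ! Suc i)))"

text \<open>Map letters by phi, delete letters equal to the base point b (= unit), reduce.\<close>
definition wmap :: "('a \<Rightarrow> 'b) \<Rightarrow> 'b \<Rightarrow> ('a \<times> bool) list \<Rightarrow> ('b \<times> bool) list" where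
  "wmap \<phi> b ws = reduce (filter (\<lambda>l. fst l \<noteq> b) (map (\<lambda>(x, e). (\<phi> x, e)) ws))"

definition free_sg :: "('a, 'm) psset_scheme \<Rightarrow> ('a \<times> bool) list sgrp" where
  "free_sg K = \<lparr> cells = (\<lambda>n. {w. reduced w \<and> (\<forall>l \<in> set w. fst l \<in> cells K n \<and> fst l \<noteq> bpt K n)}),
                face = (\<lambda>n i. wmap (face K n i) (bpt K (n - 1))),
                degen = (\<lambda>n i. wmap (degen K n i) (bpt K (Suc n))),
                base = [],
                gmul = (\<lambda>n u v. reduce (u @ v)),
                gone = (\<lambda>n. []) \<rparr>"

definition Ffun :: "('a, 'm) psset_scheme \<Rightarrow> (nat \<Rightarrow> 'b \<Rightarrow> 'a) \<Rightarrow> nat \<Rightarrow> ('b \<times> bool) list \<Rightarrow> ('a \<times> bool) list" where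
  "Ffun K g n = wmap (g n) (bpt K n)"

definition jgen :: "('a, 'm) psset_scheme \<Rightarrow> nat \<Rightarrow> 'a \<Rightarrow> ('a \<times> bool) list" where
  "jgen K n x = (if x = bpt K n then [] else [(x, False)])"

definition mbar :: "('a, 'm) psset_scheme \<Rightarrow> (nat \<Rightarrow> 'a \<times> 'a \<Rightarrow> 'a) \<Rightarrow> (nat \<Rightarrow> 'a \<Rightarrow> 'a) \<Rightarrow>
    nat \<Rightarrow> ('a \<times> bool) list \<Rightarrow> 'a" where
  "mbar K m \<nu> n w =
     (let lett = (\<lambda>(x, e). if e then \<nu> n x else x) in
      case w of [] \<Rightarrow> bpt K n
      | l # ls \<Rightarrow> foldl (\<lambda>acc l'. m n (acc, lett l')) (lett l) ls)"

definition star :: "('a, 'm) psset_scheme \<Rightarrow> (nat \<Rightarrow> 'a \<times> 'a \<Rightarrow> 'a) \<Rightarrow> (nat \<Rightarrow> 'a \<Rightarrow> 'a) \<Rightarrow>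
    (nat \<Rightarrow> 'c \<Rightarrow> ('b \<times> bool) list) \<Rightarrow> (nat \<Rightarrow> 'b \<Rightarrow> 'a) \<Rightarrow> nat \<Rightarrow> 'c \<Rightarrow> 'a" where
  "star K m \<nu> f g n w = mbar K m \<nu> n (Ffun K g n (f n w))"

definition star_cond :: "('a, 'm) psset_scheme \<Rightarrow> (nat \<Rightarrow> 'a \<times> 'a \<Rightarrow> 'a) \<Rightarrow> (nat \<Rightarrow> 'a \<Rightarrow> 'a) \<Rightarrow>
    ('x, 'p) psset_scheme \<Rightarrow> ('y, 'q) psset_scheme \<Rightarrow>
    (nat \<Rightarrow> ('x \<times> bool) list \<Rightarrow> ('y \<times> bool) list) \<Rightarrow>
    (nat \<Rightarrow> ('y \<times> bool) list \<Rightarrow> ('z \<times> bool) list) \<Rightarrow> (nat \<Rightarrow> 'z \<Rightarrow> 'a) \<Rightarrow> bool" where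
  "star_cond K m \<nu> A B f g h \<longleftrightarrow>
     (\<forall>n w. w \<in> cells (free_sg A) n \<longrightarrow>
        star K m \<nu> f (\<lambda>k x. star K m \<nu> g h k (jgen B k x)) n w
        = star K m \<nu> (\<lambda>k. g k \<circ> f k) h n w)"

definition h_equiv_sgroup :: "('a, 'm) psset_scheme \<Rightarrow> (nat \<Rightarrow> 'a \<times> 'a \<Rightarrow> 'a) \<Rightarrow>
    ('b, 'n) sgrp_scheme \<Rightarrow> bool" where
  "h_equiv_sgroup K m G \<longleftrightarrow>
     (\<exists>\<phi> \<psi>. psmap K G \<phi> \<and> psmap G K \<psi> \<and>
        homotopic K K (\<lambda>n x. \<psi> n (\<phi> n x)) (\<lambda>n x. x) \<and>
        homotopic G G (\<lambda>n x. \<phi> n (\<psi> n x)) (\<lambda>n x. x) \<and>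
        homotopic (sprod K K) G (\<lambda>n (x, y). \<phi> n (m n (x, y)))
                                 (\<lambda>n (x, y). gmul G n (\<phi> n x) (\<phi> n y)))"

type_synonym 'a bigT = "('a \<times> bool) list set"

end

theory Submission
  imports Defs
begin


definition inv_l :: "'x \<times> bool \<Rightarrow> 'x \<times> bool" where "inv_l l = (fst l, \<not> snd l)"
definition invw :: "('x \<times> bool) list \<Rightarrow> ('x \<times> bool) list" where "invw u = rev (map inv_l u)"
definition ext :: "('x \<times> bool \<Rightarrow> ('y \<times> bool) list) \<Rightarrow> ('x \<times> bool) list \<Rightarrow> ('y \<times> bool) list" where
  "ext \<tau> w = concat (map \<tau> w)"
definition good :: "('x \<times> bool \<Rightarrow> ('y \<times> bool) list) \<Rightarrow> bool" where
  "good \<tau> \<longleftrightarrow> (\<forall>x e. \<tau> (x, \<not> e) = invw (\<tau> (x, e)))"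

lemma invw_simps[simp]: "invw [] = []" "invw (a # u) = invw u @ [inv_l a]" "invw (u @ v) = invw v @ invw u"
  by (auto simp: invw_def)
lemma inv_l_inv_l[simp]: "inv_l (inv_l a) = a" by (simp add: inv_l_def)
lemma invw_invw[simp]: "invw (invw u) = u" by (induct u) auto

lemma ext_simps[simp]: "ext \<tau> [] = []" "ext \<tau> (a # u) = \<tau> a @ ext \<tau> u" "ext \<tau> (u @ v) = ext \<tau> u @ ext \<tau> v"
  by (auto simp: ext_def)

lemma ext_invw: "good \<tau> \<Longrightarrow> ext \<tau> (invw u) = invw (ext \<tau> u)"
proof (induct u)
  case (Cons a u)
  have "\<tau> (inv_l a) = invw (\<tau> a)" using Cons(2) unfolding good_def inv_l_def
    by (cases a) auto
  then show ?case using Cons by simp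
qed simp

lemma all_nat_split: "(\<forall>i::nat. Q i) \<longleftrightarrow> Q 0 \<and> (\<forall>i. Q (Suc i))"
  by (metis not0_implies_Suc)

lemma reduced_simps[simp]:
  "reduced []" "reduced [a]"
  "reduced (a # b # r) \<longleftrightarrow> \<not> (fst a = fst b \<and> snd a \<noteq> snd b) \<and> reduced (b # r)"
  unfolding reduced_def by (subst all_nat_split; simp)+

lemma reduced_Cons_tl: "reduced (a # r) \<Longrightarrow> reduced r"
  by (cases r) auto

lemma reduce_Nil[simp]: "reduce [] = []" by (simp add: reduce_def)
lemma reduce_Cons: "reduce (a # w) = cancel_cons a (reduce w)" by (simp add: reduce_def)
lemma reduce_append: "reduce (xs @ ys) = foldr cancel_cons xs (reduce ys)" by (simp add: reduce_def)

lemma reduced_cancel_cons: "reduced r \<Longrightarrow> reduced (cancel_cons a r)"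
  by (cases r) (auto simp: cancel_cons_def dest: reduced_Cons_tl)

lemma reduced_foldr: "reduced r \<Longrightarrow> reduced (foldr cancel_cons xs r)"
  by (induct xs) (auto intro: reduced_cancel_cons)

lemma reduced_reduce[simp]: "reduced (reduce w)"
  unfolding reduce_def by (rule reduced_foldr) simp

lemma reduce_reduced: "reduced w \<Longrightarrow> reduce w = w"
proof (induct w)
  case (Cons a w)
  then have "reduce w = w" using reduced_Cons_tl by blast
  then show ?case using Cons(2) by (cases w) (auto simp: reduce_Cons cancel_cons_def)
qed simp

lemma reduce_reduce[simp]: "reduce (reduce w) = reduce w"
  by (simp add: reduce_reduced)

lemma cancel_cons_inv: "reduced r \<Longrightarrow> cancel_cons a (cancel_cons (inv_l a) r) = r"
  by (cases r; cases a) (auto simp: cancel_cons_def inv_l_def split: list.splits)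

lemma foldr_reduce: "reduced r \<Longrightarrow> foldr cancel_cons (reduce xs) r = foldr cancel_cons xs r"
proof (induct xs)
  case (Cons a xs)
  show ?case
  proof (cases "\<exists>c cs. reduce xs = c # cs \<and> fst c = fst a \<and> snd c \<noteq> snd a")
    case True
    then obtain c cs where c: "reduce xs = c # cs" "fst c = fst a" "snd c \<noteq> snd a" by blast
    then have ca: "c = inv_l a" by (cases c; cases a) (auto simp: inv_l_def)
    have "foldr cancel_cons (reduce (a # xs)) r = foldr cancel_cons cs r"
      using c by (simp add: reduce_Cons cancel_cons_def)
    also have "\<dots> = cancel_cons a (cancel_cons (inv_l a) (foldr cancel_cons cs r))"
      by (rule cancel_cons_inv[symmetric]) (rule reduced_foldr[OF Cons(2)])
    also have "\<dots> = cancel_cons a (foldr cancel_cons (reduce xs) r)" using c ca by simp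
    also have "\<dots> = foldr cancel_cons (a # xs) r" using Cons by simp
    finally show ?thesis .
  next
    case False
    then have "reduce (a # xs) = a # reduce xs"
      by (auto simp: reduce_Cons cancel_cons_def split: list.splits)
    then show ?thesis using Cons by simp
  qed
qed simp

lemma reduce_left[simp]: "reduce (reduce xs @ ys) = reduce (xs @ ys)"
  by (simp add: reduce_append foldr_reduce)

lemma reduce_right[simp]: "reduce (xs @ reduce ys) = reduce (xs @ ys)"
  by (simp add: reduce_append)

lemma reduce_both: "reduce (reduce xs @ reduce ys) = reduce (xs @ ys)"
  by simp

lemma reduce_cancel_invw: "reduce (u @ invw u @ ys) = reduce ys"
proof (induct u arbitrary: ys)
  case (Cons a u)
  have "reduce ((a # u) @ invw (a # u) @ ys) = cancel_cons a (reduce (u @ invw u @ (inv_l a # ys)))"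
    by (simp add: reduce_Cons)
  also have "\<dots> = cancel_cons a (cancel_cons (inv_l a) (reduce ys))"
    using Cons by (simp add: reduce_Cons)
  also have "\<dots> = reduce ys" by (simp add: cancel_cons_inv)
  finally show ?case .
qed simp

lemma set_cancel_cons: "set (cancel_cons a r) \<subseteq> insert a (set r)"
  by (cases r) (auto simp: cancel_cons_def)

lemma set_reduce: "set (reduce w) \<subseteq> set w"
  by (induct w) (use set_cancel_cons in \<open>fastforce simp: reduce_Cons\<close>)+

lemma reduce_ext_reduce: "good \<tau> \<Longrightarrow> reduce (ext \<tau> (reduce w)) = reduce (ext \<tau> w)"
proof (induct w)
  case (Cons a w)
  let ?r = "reduce w"
  have IH: "reduce (ext \<tau> ?r) = reduce (ext \<tau> w)" using Cons by simp
  have "reduce (ext \<tau> (cancel_cons a ?r)) = reduce (\<tau> a @ ext \<tau> ?r)"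
  proof (cases "\<exists>c cs. ?r = c # cs \<and> fst c = fst a \<and> snd c \<noteq> snd a")
    case True
    then obtain c cs where c: "?r = c # cs" "fst c = fst a" "snd c \<noteq> snd a" by blast
    then have ca: "c = inv_l a" by (cases c; cases a) (auto simp: inv_l_def)
    have tc: "\<tau> c = invw (\<tau> a)" using Cons(2) ca unfolding good_def inv_l_def
      by (cases a) auto
    have "reduce (\<tau> a @ ext \<tau> ?r) = reduce (\<tau> a @ invw (\<tau> a) @ ext \<tau> cs)"
      using c tc by simp
    also have "\<dots> = reduce (ext \<tau> cs)" by (rule reduce_cancel_invw)
    finally show ?thesis using c by (simp add: cancel_cons_def)
  next
    case False
    then have "cancel_cons a ?r = a # ?r"
      by (auto simp: cancel_cons_def split: list.splits)
    then show ?thesis by simp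
  qed
  also have "\<dots> = reduce (\<tau> a @ reduce (ext \<tau> ?r))" by simp
  also have "\<dots> = reduce (\<tau> a @ ext \<tau> w)" using IH by simp
  finally show ?case by (simp add: reduce_Cons)
qed simp

definition tw :: "('x \<Rightarrow> 'y) \<Rightarrow> 'y \<Rightarrow> 'x \<times> bool \<Rightarrow> ('y \<times> bool) list" where
  "tw \<phi> b l = (if \<phi> (fst l) = b then [] else [(\<phi> (fst l), snd l)])"

lemma good_tw: "good (tw \<phi> b)" by (auto simp: good_def tw_def inv_l_def)

lemma wmap_ext: "wmap \<phi> b w = reduce (ext (tw \<phi> b) w)"
proof -
  have "filter (\<lambda>l. fst l \<noteq> b) (map (\<lambda>(x, e). (\<phi> x, e)) w) = ext (tw \<phi> b) w"
    by (induct w) (auto simp: tw_def)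
  then show ?thesis by (simp add: wmap_def)
qed

lemma wmap_reduce: "wmap \<phi> b (reduce w) = wmap \<phi> b w"
  by (simp add: wmap_ext reduce_ext_reduce good_tw)




lemma ps_base: "pssset X \<Longrightarrow> base X \<in> cells X 0" by (simp add: pssset_def)
lemma ps_face: "pssset X \<Longrightarrow> x \<in> cells X (Suc n) \<Longrightarrow> i \<le> Suc n \<Longrightarrow> face X (Suc n) i x \<in> cells X n"
  by (simp add: pssset_def)
lemma ps_degen: "pssset X \<Longrightarrow> x \<in> cells X n \<Longrightarrow> i \<le> n \<Longrightarrow> degen X n i x \<in> cells X (Suc n)"
  by (simp add: pssset_def)
lemma ps_ff: "pssset X \<Longrightarrow> x \<in> cells X (Suc (Suc n)) \<Longrightarrow> i < j \<Longrightarrow> j \<le> Suc (Suc n) \<Longrightarrow>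
        face X (Suc n) i (face X (Suc (Suc n)) j x) = face X (Suc n) (j - 1) (face X (Suc (Suc n)) i x)"
  by (simp add: pssset_def)
lemma ps_dd: "pssset X \<Longrightarrow> x \<in> cells X n \<Longrightarrow> i \<le> j \<Longrightarrow> j \<le> n \<Longrightarrow>
        degen X (Suc n) i (degen X n j x) = degen X (Suc n) (Suc j) (degen X n i x)"
  by (simp add: pssset_def)
lemma ps_fd1: "pssset X \<Longrightarrow> x \<in> cells X n \<Longrightarrow> i < j \<Longrightarrow> j \<le> n \<Longrightarrow>
        face X (Suc n) i (degen X n j x) = degen X (n - 1) (j - 1) (face X n i x)"
  by (simp add: pssset_def)
lemma ps_fd2: "pssset X \<Longrightarrow> x \<in> cells X n \<Longrightarrow> j \<le> n \<Longrightarrow> face X (Suc n) j (degen X n j x) = x"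
  by (simp add: pssset_def)
lemma ps_fd3: "pssset X \<Longrightarrow> x \<in> cells X n \<Longrightarrow> j \<le> n \<Longrightarrow> face X (Suc n) (Suc j) (degen X n j x) = x"
  by (simp add: pssset_def)
lemma ps_fd4: "pssset X \<Longrightarrow> x \<in> cells X n \<Longrightarrow> Suc j < i \<Longrightarrow> i \<le> Suc n \<Longrightarrow>
        face X (Suc n) i (degen X n j x) = degen X (n - 1) j (face X n (i - 1) x)"
  by (simp add: pssset_def)

lemma bpt_cells: "pssset X \<Longrightarrow> bpt X n \<in> cells X n"
  by (induct n) (auto intro: ps_base ps_degen)

lemma degen_bpt: "pssset X \<Longrightarrow> j \<le> n \<Longrightarrow> degen X n j (bpt X n) = bpt X (Suc n)"
proof (induct n arbitrary: j)
  case 0 then show ?case by simp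
next
  case (Suc n)
  note IH = Suc(1) and X = Suc(2) and jn = Suc(3)
  show ?case
  proof (cases j)
    case 0 then show ?thesis by simp
  next
    case (Suc j')
    have "degen X (Suc n) j (bpt X (Suc n)) = degen X (Suc n) (Suc j') (degen X n 0 (bpt X n))"
      using Suc by simp
    also have "\<dots> = degen X (Suc n) 0 (degen X n j' (bpt X n))"
      using ps_dd[OF X bpt_cells[OF X], of 0 j' n] Suc jn by simp
    also have "\<dots> = bpt X (Suc (Suc n))" using IH[OF X, of j'] Suc jn by simp
    finally show ?thesis .
  qed
qed

lemma face_bpt: "pssset X \<Longrightarrow> i \<le> Suc n \<Longrightarrow> face X (Suc n) i (bpt X (Suc n)) = bpt X n"
proof (cases "i \<le> n")
  case True
  assume X: "pssset X"
  have "bpt X (Suc n) = degen X n i (bpt X n)" using degen_bpt[OF X True] by simp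
  then show ?thesis using ps_fd2[OF X bpt_cells[OF X] True] by simp
next
  case False
  assume X: "pssset X" and i: "i \<le> Suc n"
  then have i': "i = Suc n" using False by simp
  have "bpt X (Suc n) = degen X n n (bpt X n)" using degen_bpt[OF X, of n n] by simp
  then show ?thesis using ps_fd3[OF X bpt_cells[OF X], of n n] i' by simp
qed

lemma pm_cells: "psmap X Y f \<Longrightarrow> x \<in> cells X n \<Longrightarrow> f n x \<in> cells Y n" by (simp add: psmap_def)
lemma pm_face: "psmap X Y f \<Longrightarrow> x \<in> cells X (Suc n) \<Longrightarrow> i \<le> Suc n \<Longrightarrow>
        f n (face X (Suc n) i x) = face Y (Suc n) i (f (Suc n) x)" by (simp add: psmap_def)
lemma pm_degen: "psmap X Y f \<Longrightarrow> x \<in> cells X n \<Longrightarrow> i \<le> n \<Longrightarrow>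
        f (Suc n) (degen X n i x) = degen Y n i (f n x)" by (simp add: psmap_def)
lemma pm_base: "psmap X Y f \<Longrightarrow> f 0 (base X) = base Y" by (simp add: psmap_def)

lemma pm_bpt: "psmap X Y f \<Longrightarrow> pssset X \<Longrightarrow> f n (bpt X n) = bpt Y n"
  by (induct n) (auto simp: pm_base pm_degen bpt_cells)

lemma pm_comp: "psmap X Y f \<Longrightarrow> psmap Y Z g \<Longrightarrow> psmap X Z (\<lambda>n x. g n (f n x))"
  unfolding psmap_def by auto

lemma homotopic_refl:
  assumes X: "pssset X" and Y: "pssset Y" and f: "psmap X Y f"
    and g: "\<And>n x. x \<in> cells X n \<Longrightarrow> g n x = f n x"
  shows "homotopic X Y f g"
  unfolding homotopic_def
proof (rule exI[of _ "\<lambda>q j x. degen Y q j (f q x)"], unfold shtpy_def, intro conjI allI impI)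
  fix q j x assume "x \<in> cells X q \<and> j \<le> q"
  then show "degen Y q j (f q x) \<in> cells Y (Suc q)" by (auto intro: ps_degen[OF Y] pm_cells[OF f])
next
  fix q x assume x: "x \<in> cells X q"
  show "face Y (Suc q) 0 (degen Y q 0 (f q x)) = f q x"
    using ps_fd2[OF Y pm_cells[OF f x], of 0] by simp
next
  fix q x assume x: "x \<in> cells X q"
  show "face Y (Suc q) (Suc q) (degen Y q q (f q x)) = g q x"
    using ps_fd3[OF Y pm_cells[OF f x], of q] g[OF x] by simp
next
  fix q i j x assume a: "x \<in> cells X q \<and> i < j \<and> j \<le> q"
  then obtain p where q: "q = Suc p" by (cases q) auto
  show "face Y (Suc q) i (degen Y q j (f q x)) = degen Y (q - 1) (j - 1) (f (q - 1) (face X q i x))"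
    using ps_fd1[OF Y pm_cells[OF f, of x q], of i j] pm_face[OF f, of x p i] a q by simp
next
  fix q j x assume a: "x \<in> cells X q \<and> Suc j \<le> q"
  show "face Y (Suc q) (Suc j) (degen Y q (Suc j) (f q x)) = face Y (Suc q) (Suc j) (degen Y q j (f q x))"
    using ps_fd2[OF Y pm_cells[OF f, of x q], of "Suc j"] ps_fd3[OF Y pm_cells[OF f, of x q], of j] a by simp
next
  fix q i j x assume a: "x \<in> cells X q \<and> j \<le> q \<and> Suc j < i \<and> i \<le> Suc q"
  then obtain p where q: "q = Suc p" by (cases q) auto
  show "face Y (Suc q) i (degen Y q j (f q x)) = degen Y (q - 1) j (f (q - 1) (face X q (i - 1) x))"
  proof -
    have xq: "x \<in> cells X (Suc p)" using a q by simp
    have 1: "face Y (Suc q) i (degen Y q j (f q x)) = degen Y (q - 1) j (face Y q (i - 1) (f q x))"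
      using ps_fd4[OF Y pm_cells[OF f, of x q], of j i] a by blast
    have 2: "f p (face X (Suc p) (i - 1) x) = face Y (Suc p) (i - 1) (f (Suc p) x)"
      by (rule pm_face[OF f xq]) (use a q in arith)
    show ?thesis using 1 2 q by simp
  qed
next
  fix q i j x assume a: "x \<in> cells X q \<and> i \<le> j \<and> j \<le> q"
  show "degen Y (Suc q) i (degen Y q j (f q x)) = degen Y (Suc q) (Suc j) (f (Suc q) (degen X q i x))"
    using ps_dd[OF Y pm_cells[OF f, of x q], of i j] pm_degen[OF f, of x q i] a by simp
next
  fix q i j x assume a: "x \<in> cells X q \<and> j < i \<and> i \<le> Suc q"
  then obtain i' where i: "i = Suc i'" by (cases i) auto
  show "degen Y (Suc q) i (degen Y q j (f q x)) = degen Y (Suc q) j (f (Suc q) (degen X q (i - 1) x))"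
    using ps_dd[OF Y pm_cells[OF f, of x q], of j i'] pm_degen[OF f, of x q i'] a i by simp
next
  fix q j :: nat assume "j \<le> q"
  then show "degen Y q j (f q (bpt X q)) = bpt Y (Suc q)"
    using pm_bpt[OF f X, of q] degen_bpt[OF Y, of j q] by (simp del: bpt.simps)
qed

lemma bpt_sprod: "bpt (sprod X Y) n = (bpt X n, bpt Y n)"
  by (induct n) (auto simp: sprod_def)

lemma cells_sprod[simp]: "cells (sprod X Y) n = cells X n \<times> cells Y n" by (simp add: sprod_def)
lemma face_sprod[simp]: "face (sprod X Y) n i p = (face X n i (fst p), face Y n i (snd p))" by (simp add: sprod_def split_beta)
lemma degen_sprod[simp]: "degen (sprod X Y) n i p = (degen X n i (fst p), degen Y n i (snd p))" by (simp add: sprod_def split_beta)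
lemma base_sprod[simp]: "base (sprod X Y) = (base X, base Y)" by (simp add: sprod_def)

lemma pssset_sprod: "pssset X \<Longrightarrow> pssset Y \<Longrightarrow> pssset (sprod X Y)"
  apply (subst pssset_def)
  apply (intro conjI allI impI; clarsimp)
  apply (simp_all add: ps_base ps_face ps_degen ps_ff ps_dd ps_fd1 ps_fd2 ps_fd3 ps_fd4)
  done




definition trm :: "('x,'m) psset_scheme \<Rightarrow> ('x \<Rightarrow> 'y) \<Rightarrow> ('y \<Rightarrow> 'x) \<Rightarrow> 'z \<Rightarrow> ('y,'z) psset_scheme" where
  "trm X en de mr = \<lparr>cells = \<lambda>n. en ` cells X n, face = \<lambda>n i y. en (face X n i (de y)),
     degen = \<lambda>n i y. en (degen X n i (de y)), base = en (base X), \<dots> = mr\<rparr>"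

lemma trm_simps[simp]:
  "cells (trm X en de mr) n = en ` cells X n"
  "face (trm X en de mr) n i y = en (face X n i (de y))"
  "degen (trm X en de mr) n i y = en (degen X n i (de y))"
  "base (trm X en de mr) = en (base X)"
  by (simp_all add: trm_def)

lemma bpt_trm: "(\<And>x. de (en x) = x) \<Longrightarrow> bpt (trm X en de mr) n = en (bpt X n)"
  by (induct n) auto

lemma pssset_trm: assumes inv: "\<And>x. de (en x) = x" and X: "pssset X" shows "pssset (trm X en de mr)"
  using X
  apply (subst pssset_def)
  apply (intro conjI allI impI; clarsimp simp: inv)
  apply (simp_all add: ps_base ps_face ps_degen ps_ff ps_dd ps_fd1 ps_fd2 ps_fd3 ps_fd4 inv)
  done

lemma psmap_trm_de: assumes inv: "\<And>x. de (en x) = x" and X: "pssset X"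
  shows "psmap (trm X en de mr) X (\<lambda>n. de)"
  unfolding psmap_def using X by (auto simp: inv ps_face ps_degen)

lemma psmap_trm_en: assumes inv: "\<And>x. de (en x) = x"
  shows "psmap X (trm X en de mr) (\<lambda>n. en)"
  unfolding psmap_def by (auto simp: inv)

definition Db :: "bool psset" where
  "Db = \<lparr>cells = \<lambda>n. UNIV, face = \<lambda>n i x. x, degen = \<lambda>n i x. x, base = False\<rparr>"

lemma Db_simps[simp]: "cells Db n = UNIV" "face Db n i x = x" "degen Db n i x = x" "base Db = False"
  by (simp_all add: Db_def)
lemma pssset_Db: "pssset Db" by (simp add: pssset_def)
lemma bpt_Db[simp]: "bpt Db n = False" by (induct n) auto

definition embK :: "'a \<Rightarrow> 'a bigT" where "embK x = {[(x, False)]}"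
definition decK :: "'a bigT \<Rightarrow> 'a" where "decK S = fst (hd (the_elem S))"
lemma decK_embK[simp]: "decK (embK x) = x" by (simp add: embK_def decK_def)
lemma embK_inj[simp]: "embK x = embK y \<longleftrightarrow> x = y" by (auto simp: embK_def)

definition encB :: "('a \<times> bool) \<times> ('a \<times> bool) \<Rightarrow> 'a bigT" where "encB p = {[fst p, snd p]}"
definition decB :: "'a bigT \<Rightarrow> ('a \<times> bool) \<times> ('a \<times> bool)" where "decB S = (the_elem S ! 0, the_elem S ! 1)"
lemma decB_encB[simp]: "decB (encB p) = p" by (simp add: encB_def decB_def)
lemma encB_inj[simp]: "encB p = encB q \<longleftrightarrow> p = q" by (metis decB_encB)




definition sgw :: "bool \<Rightarrow> ('x \<times> bool) list \<Rightarrow> ('x \<times> bool) list" where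
  "sgw e u = (if e then invw u else u)"
definition jgb :: "'a \<Rightarrow> 'a \<Rightarrow> bool \<Rightarrow> ('a bigT \<times> bool) list" where
  "jgb b y e = (if y = b then [] else [(embK y, e)])"
definition sigb :: "'a \<Rightarrow> 'a bigT \<Rightarrow> ('a bigT \<times> bool) list" where
  "sigb b S = jgb b (fst (fst (decB S))) (snd (fst (decB S))) @ jgb b (fst (snd (decB S))) (snd (snd (decB S)))"
definition tgb :: "'a \<Rightarrow> 'a bigT \<times> bool \<Rightarrow> ('a bigT \<times> bool) list" where
  "tgb b l = sgw (snd l) (sigb b (fst l))"

lemma good_tgb: "good (tgb b)" by (auto simp: good_def tgb_def sgw_def)

lemma ext_sgn: "good \<tau> \<Longrightarrow> ext \<tau> (sgw e u) = sgw e (ext \<tau> u)"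
  by (simp add: sgw_def ext_invw)

lemma compat:
  fixes op :: "'a \<Rightarrow> 'a"
  assumes "op b = b'"
  shows "ext (tgb b') (tw (\<lambda>S. encB ((op (fst (fst (decB S))), snd (fst (decB S))), (op (fst (snd (decB S))), snd (snd (decB S))))) (encB ((b', False), (b', False))) (encB ((y,e1),(z,e2)), e))
       = ext (tw (\<lambda>S. embK (op (decK S))) (embK b')) (tgb b (encB ((y,e1),(z,e2)), e))"
proof -
  have 1: "ext (tw (\<lambda>S. embK (op (decK S))) (embK b')) (sigb b (encB ((y,e1),(z,e2)))) = sigb b' (encB ((op y,e1),(op z,e2)))"
    using assms by (auto simp: sigb_def jgb_def tw_def)
  have 3: "sigb b' (encB ((b',False),(b',False))) = []" by (simp add: sigb_def jgb_def)
  have 2: "ext (tgb b') (tw (\<lambda>S. encB ((op (fst (fst (decB S))), snd (fst (decB S))), (op (fst (snd (decB S))), snd (snd (decB S))))) (encB ((b', False), (b', False))) (encB ((y,e1),(z,e2)), e))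
     = sgw e (sigb b' (encB ((op y,e1),(op z,e2))))"
  proof (cases "encB ((op y,e1),(op z,e2)) = encB ((b', False), (b', False))")
    case True
    then have "((op y,e1),(op z,e2)) = ((b', False), (b', False))" by simp
    then show ?thesis using 3 by (simp add: tw_def sgw_def)
  next
    case False
    then show ?thesis using 3 by (auto simp: tw_def tgb_def sgw_def)
  qed
  have 4: "ext (tw (\<lambda>S. embK (op (decK S))) (embK b')) (tgb b (encB ((y,e1),(z,e2)), e)) = sgw e (sigb b' (encB ((op y,e1),(op z,e2))))"
    unfolding tgb_def by (simp add: ext_sgn good_tw 1 del: ext_simps)
  show ?thesis using 2 4 by simp
qed

definition KD :: "'a psset \<Rightarrow> (('a \<times> bool) \<times> ('a \<times> bool)) psset" where
  "KD K = sprod (sprod K Db) (sprod K Db)"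
definition CK :: "'a psset \<Rightarrow> 'a bigT psset" where "CK K = trm K embK decK ()"
definition BK :: "'a psset \<Rightarrow> 'a bigT psset" where "BK K = trm (KD K) encB decB ()"
definition gB :: "'a psset \<Rightarrow> nat \<Rightarrow> ('a bigT \<times> bool) list \<Rightarrow> ('a bigT \<times> bool) list" where
  "gB K n w = reduce (ext (tgb (bpt K n)) w)"

lemma free_sg_simps[simp]:
  "cells (free_sg X) n = {w. reduced w \<and> (\<forall>l \<in> set w. fst l \<in> cells X n \<and> fst l \<noteq> bpt X n)}"
  "face (free_sg X) n i = wmap (face X n i) (bpt X (n - 1))"
  "degen (free_sg X) n i = wmap (degen X n i) (bpt X (Suc n))"
  "base (free_sg X) = []"
  "gmul (free_sg X) n u v = reduce (u @ v)"
  "gone (free_sg X) n = []"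
  by (simp_all add: free_sg_def)

lemma grp_of_simps[simp]: "carrier (grp_of G n) = cells G n" "mult (grp_of G n) = gmul G n" "one (grp_of G n) = gone G n"
  by (simp_all add: grp_of_def)

lemma ext_ext: "ext \<tau>1 (ext \<tau>2 w) = ext (\<lambda>l. ext \<tau>1 (\<tau>2 l)) w"
  by (induct w) auto
lemma ext_cong: "(\<And>l. l \<in> set w \<Longrightarrow> \<tau> l = \<tau>' l) \<Longrightarrow> ext \<tau> w = ext \<tau>' w"
  by (induct w) auto
lemma set_ext: "l \<in> set (ext \<tau> w) \<Longrightarrow> \<exists>l' \<in> set w. l \<in> set (\<tau> l')"
  by (induct w) auto

lemma bpt_CK: "bpt (CK K) n = embK (bpt K n)"
  unfolding CK_def by (rule bpt_trm) simp
lemma bpt_BK: "bpt (BK K) n = encB ((bpt K n, False), (bpt K n, False))"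
  unfolding BK_def by (subst bpt_trm) (simp_all add: KD_def bpt_sprod)
lemma cells_CK: "cells (CK K) n = embK ` cells K n" by (simp add: CK_def)
lemma cells_BK: "S \<in> cells (BK K) n \<Longrightarrow> \<exists>y e1 z e2. S = encB ((y,e1),(z,e2)) \<and> y \<in> cells K n \<and> z \<in> cells K n"
  by (auto simp: BK_def KD_def)
lemma cells_BK_I: "y \<in> cells K n \<Longrightarrow> z \<in> cells K n \<Longrightarrow> encB ((y,e1),(z,e2)) \<in> cells (BK K) n"
  by (auto simp: BK_def KD_def)
lemma face_CK: "face (CK K) m i = (\<lambda>S. embK (face K m i (decK S)))" by (rule ext) (simp add: CK_def)
lemma degen_CK: "degen (CK K) m i = (\<lambda>S. embK (degen K m i (decK S)))" by (rule ext) (simp add: CK_def)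
lemma face_BK: "face (BK K) m i = (\<lambda>S. encB ((face K m i (fst (fst (decB S))), snd (fst (decB S))), (face K m i (fst (snd (decB S))), snd (snd (decB S)))))"
  by (rule ext) (simp add: BK_def KD_def)
lemma degen_BK: "degen (BK K) m i = (\<lambda>S. encB ((degen K m i (fst (fst (decB S))), snd (fst (decB S))), (degen K m i (fst (snd (decB S))), snd (snd (decB S)))))"
  by (rule ext) (simp add: BK_def KD_def)

lemma gB_cells: assumes w: "w \<in> cells (free_sg (BK K)) n" shows "gB K n w \<in> cells (free_sg (CK K)) n"
proof -
  have "\<forall>l \<in> set (ext (tgb (bpt K n)) w). fst l \<in> cells (CK K) n \<and> fst l \<noteq> bpt (CK K) n"
  proof
    fix l assume "l \<in> set (ext (tgb (bpt K n)) w)"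
    then obtain l' where l': "l' \<in> set w" "l \<in> set (tgb (bpt K n) l')" using set_ext by blast
    then obtain y e1 z e2 where S: "fst l' = encB ((y,e1),(z,e2))" "y \<in> cells K n" "z \<in> cells K n"
      using w cells_BK by fastforce
    have "l \<in> set (sigb (bpt K n) (fst l')) \<or> inv_l l \<in> set (sigb (bpt K n) (fst l'))"
      using l'(2) by (auto simp: tgb_def sgw_def invw_def split: if_splits)
    then show "fst l \<in> cells (CK K) n \<and> fst l \<noteq> bpt (CK K) n"
      using S by (auto simp: sigb_def jgb_def cells_CK bpt_CK inv_l_def split: if_splits)
  qed
  then show ?thesis unfolding gB_def using set_reduce by fastforce
qed

lemma gB_hom: assumes u: "u \<in> cells (free_sg (BK K)) n" and v: "v \<in> cells (free_sg (BK K)) n"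
  shows "gB K n (reduce (u @ v)) = reduce (gB K n u @ gB K n v)"
  unfolding gB_def by (simp add: reduce_ext_reduce good_tgb)

lemma gB_face:
  assumes K: "pssset K" and w: "w \<in> cells (free_sg (BK K)) (Suc n)" and i: "i \<le> Suc n"
  shows "gB K n (face (free_sg (BK K)) (Suc n) i w) = face (free_sg (CK K)) (Suc n) i (gB K (Suc n) w)"
proof -
  have "gB K n (face (free_sg (BK K)) (Suc n) i w) = reduce (ext (\<lambda>l. ext (tgb (bpt K n)) (tw (face (BK K) (Suc n) i) (bpt (BK K) n) l)) w)"
    by (simp add: gB_def wmap_ext reduce_ext_reduce good_tgb ext_ext)
  also have "\<dots> = reduce (ext (\<lambda>l. ext (tw (face (CK K) (Suc n) i) (bpt (CK K) n)) (tgb (bpt K (Suc n)) l)) w)"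
  proof (rule arg_cong[where f = reduce], rule ext_cong)
    fix l assume "l \<in> set w"
    then obtain y e1 z e2 where S: "fst l = encB ((y,e1),(z,e2))"
      using w cells_BK by fastforce
    obtain e where l: "l = (encB ((y,e1),(z,e2)), e)" using S by (cases l) auto
    show "ext (tgb (bpt K n)) (tw (face (BK K) (Suc n) i) (bpt (BK K) n) l) = ext (tw (face (CK K) (Suc n) i) (bpt (CK K) n)) (tgb (bpt K (Suc n)) l)"
      unfolding l face_BK face_CK bpt_BK bpt_CK
      by (rule compat) (rule face_bpt[OF K i])
  qed
  also have "\<dots> = face (free_sg (CK K)) (Suc n) i (gB K (Suc n) w)"
    by (simp add: gB_def wmap_ext ext_ext reduce_ext_reduce good_tw)
  finally show ?thesis .
qed

lemma gB_degen:
  assumes K: "pssset K" and w: "w \<in> cells (free_sg (BK K)) n" and i: "i \<le> n"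
  shows "gB K (Suc n) (degen (free_sg (BK K)) n i w) = degen (free_sg (CK K)) n i (gB K n w)"
proof -
  have "gB K (Suc n) (degen (free_sg (BK K)) n i w) = reduce (ext (\<lambda>l. ext (tgb (bpt K (Suc n))) (tw (degen (BK K) n i) (bpt (BK K) (Suc n)) l)) w)"
    by (simp add: gB_def wmap_ext reduce_ext_reduce good_tgb ext_ext del: bpt.simps)
  also have "\<dots> = reduce (ext (\<lambda>l. ext (tw (degen (CK K) n i) (bpt (CK K) (Suc n))) (tgb (bpt K n) l)) w)"
  proof (rule arg_cong[where f = reduce], rule ext_cong)
    fix l assume "l \<in> set w"
    then obtain y e1 z e2 where S: "fst l = encB ((y,e1),(z,e2))"
      using w cells_BK by fastforce
    obtain e where l: "l = (encB ((y,e1),(z,e2)), e)" using S by (cases l) auto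
    show "ext (tgb (bpt K (Suc n))) (tw (degen (BK K) n i) (bpt (BK K) (Suc n)) l) = ext (tw (degen (CK K) n i) (bpt (CK K) (Suc n))) (tgb (bpt K n) l)"
      unfolding l degen_BK degen_CK bpt_BK bpt_CK
      by (rule compat) (rule degen_bpt[OF K i])
  qed
  also have "\<dots> = degen (free_sg (CK K)) n i (gB K n w)"
    by (simp add: gB_def wmap_ext ext_ext reduce_ext_reduce good_tw del: bpt.simps)
  finally show ?thesis .
qed

lemma gB_Nil: "gB K n [] = []" by (simp add: gB_def)

lemma sghom_gB: assumes K: "pssset K" shows "sghom (free_sg (BK K)) (free_sg (CK K)) (gB K)"
  unfolding sghom_def psmap_def
proof (intro conjI allI impI)
  show "\<And>n x. x \<in> cells (free_sg (BK K)) n \<Longrightarrow> gB K n x \<in> cells (free_sg (CK K)) n" by (rule gB_cells)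
  show "\<And>n i x. x \<in> cells (free_sg (BK K)) (Suc n) \<and> i \<le> Suc n \<Longrightarrow>
       gB K n (face (free_sg (BK K)) (Suc n) i x) = face (free_sg (CK K)) (Suc n) i (gB K (Suc n) x)"
    using gB_face[OF K] by blast
  show "\<And>n i x. x \<in> cells (free_sg (BK K)) n \<and> i \<le> n \<Longrightarrow>
       gB K (Suc n) (degen (free_sg (BK K)) n i x) = degen (free_sg (CK K)) n i (gB K n x)"
    using gB_degen[OF K] by blast
  show "gB K 0 (base (free_sg (BK K))) = base (free_sg (CK K))" by (simp add: gB_Nil)
  fix n
  show "gB K n \<in> hom (grp_of (free_sg (BK K)) n) (grp_of (free_sg (CK K)) n)"
    unfolding hom_def using gB_cells gB_hom
    by (auto simp del: free_sg_simps simp: free_sg_simps(5))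
qed




lemma hg_pssset: "hgroup K m \<nu> \<Longrightarrow> pssset K" by (simp add: hgroup_def)
lemma hg_m: "hgroup K m \<nu> \<Longrightarrow> psmap (sprod K K) K m" by (simp add: hgroup_def)
lemma hg_nu: "hgroup K m \<nu> \<Longrightarrow> psmap K K \<nu>" by (simp add: hgroup_def)
lemma hg_unit: "hgroup K m \<nu> \<Longrightarrow> x \<in> cells K n \<Longrightarrow> m n (x, bpt K n) = x \<and> m n (bpt K n, x) = x"
  by (simp add: hgroup_def)

lemma pssset_BK: "pssset K \<Longrightarrow> pssset (BK K)"
  unfolding BK_def KD_def by (rule pssset_trm) (auto intro: pssset_sprod pssset_Db)
lemma pssset_CK: "pssset K \<Longrightarrow> pssset (CK K)"
  unfolding CK_def by (rule pssset_trm) auto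
lemma psmap_CK: "pssset K \<Longrightarrow> psmap (CK K) K (\<lambda>n. decK)"
  unfolding CK_def by (rule psmap_trm_de) auto
lemma sghom_id: "sghom G G (\<lambda>n w. w)"
  by (simp add: sghom_def psmap_def hom_def)

lemma star_inst:
  fixes K :: "'a psset"
  assumes hg: "hgroup K m \<nu>"
    and H: "\<forall>(A :: 'a bigT psset) (B :: 'a bigT psset) (C :: 'a bigT psset) f g h.
          pssset A \<and> pssset B \<and> pssset C \<and>
          sghom (free_sg A) (free_sg B) f \<and> sghom (free_sg B) (free_sg C) g \<and>
          psmap C K h \<longrightarrow> star_cond K m \<nu> A B f g h"
    and w: "w \<in> cells (free_sg (BK K)) n"
  shows "mbar K m \<nu> n (Ffun K (\<lambda>k x. mbar K m \<nu> k (Ffun K (\<lambda>n. decK) k (gB K k (jgen (BK K) k x)))) n w)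
       = mbar K m \<nu> n (Ffun K (\<lambda>n. decK) n (gB K n w))"
proof -
  have K: "pssset K" by (rule hg_pssset[OF hg])
  have "star_cond K m \<nu> (BK K) (BK K) (\<lambda>n w. w) (gB K) (\<lambda>n. decK)"
    using H pssset_BK[OF K] pssset_CK[OF K] sghom_id sghom_gB[OF K] psmap_CK[OF K] by blast
  then show ?thesis using w unfolding star_cond_def star_def by (simp add: comp_def)
qed

lemma assoc_from_star:
  fixes K :: "'a psset"
  assumes hg: "hgroup K m \<nu>"
    and S: "\<And>n w. w \<in> cells (free_sg (BK K)) n \<Longrightarrow> mbar K m \<nu> n (Ffun K (\<lambda>k x. mbar K m \<nu> k (Ffun K (\<lambda>n. decK) k (gB K k (jgen (BK K) k x)))) n w)
       = mbar K m \<nu> n (Ffun K (\<lambda>n. decK) n (gB K n w))"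
    and x: "x \<in> cells K n" and y: "y \<in> cells K n" and z: "z \<in> cells K n"
    and xb: "x \<noteq> bpt K n" and yb: "y \<noteq> bpt K n" and zb: "z \<noteq> bpt K n"
  shows "m n (m n (x, y), z) = m n (x, m n (y, z))"
proof -
  have K: "pssset K" by (rule hg_pssset[OF hg])
  have bK: "bpt K n \<in> cells K n" by (rule bpt_cells[OF K])
  define b1 where "b1 = encB ((x, False), (bpt K n, False))"
  define b2 where "b2 = encB ((y, False), (z, False))"
  have w: "[(b1, False), (b2, False)] \<in> cells (free_sg (BK K)) n"
    using x y z bK xb yb unfolding b1_def b2_def by (auto simp: bpt_BK intro: cells_BK_I)
  have phi1: "mbar K m \<nu> n (Ffun K (\<lambda>n. decK) n (gB K n (jgen (BK K) n b1))) = x"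
    using xb unfolding b1_def
    by (simp add: jgen_def bpt_BK gB_def tgb_def sgw_def sigb_def jgb_def reduce_def cancel_cons_def Ffun_def wmap_def mbar_def)
  have phi2: "mbar K m \<nu> n (Ffun K (\<lambda>n. decK) n (gB K n (jgen (BK K) n b2))) = m n (y, z)"
    using yb zb unfolding b2_def
    by (simp add: jgen_def bpt_BK gB_def tgb_def sgw_def sigb_def jgb_def reduce_def cancel_cons_def Ffun_def wmap_def mbar_def)
  have L: "mbar K m \<nu> n (Ffun K (\<lambda>k x. mbar K m \<nu> k (Ffun K (\<lambda>n. decK) k (gB K k (jgen (BK K) k x)))) n [(b1, False), (b2, False)])
        = m n (x, m n (y, z))"
  proof (cases "m n (y, z) = bpt K n")
    case True
    then show ?thesis using phi1 phi2 xb hg_unit[OF hg x]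
      by (simp add: Ffun_def wmap_def reduce_def cancel_cons_def mbar_def)
  next
    case False
    then show ?thesis using phi1 phi2 xb
      by (simp add: Ffun_def wmap_def reduce_def cancel_cons_def mbar_def)
  qed
  have R: "mbar K m \<nu> n (Ffun K (\<lambda>n. decK) n (gB K n [(b1, False), (b2, False)])) = m n (m n (x, y), z)"
    using xb yb zb unfolding b1_def b2_def
    by (simp add: gB_def tgb_def sgw_def sigb_def jgb_def reduce_def cancel_cons_def Ffun_def wmap_def mbar_def)
  show ?thesis using S[OF w] L R by simp
qed

lemma linv_from_star:
  fixes K :: "'a psset"
  assumes hg: "hgroup K m \<nu>"
    and S: "\<And>n w. w \<in> cells (free_sg (BK K)) n \<Longrightarrow> mbar K m \<nu> n (Ffun K (\<lambda>k x. mbar K m \<nu> k (Ffun K (\<lambda>n. decK) k (gB K k (jgen (BK K) k x)))) n w)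
       = mbar K m \<nu> n (Ffun K (\<lambda>n. decK) n (gB K n w))"
    and y: "y \<in> cells K n" and yb: "y \<noteq> bpt K n"
  shows "m n (\<nu> n y, y) = bpt K n"
proof -
  have K: "pssset K" by (rule hg_pssset[OF hg])
  have bK: "bpt K n \<in> cells K n" by (rule bpt_cells[OF K])
  define b1 where "b1 = encB ((y, True), (bpt K n, False))"
  define b2 where "b2 = encB ((y, False), (bpt K n, False))"
  have w: "[(b1, False), (b2, False)] \<in> cells (free_sg (BK K)) n"
    using y bK yb unfolding b1_def b2_def by (auto simp: bpt_BK intro: cells_BK_I)
  have phi1: "mbar K m \<nu> n (Ffun K (\<lambda>n. decK) n (gB K n (jgen (BK K) n b1))) = \<nu> n y"
    using yb unfolding b1_def
    by (simp add: jgen_def bpt_BK gB_def tgb_def sgw_def sigb_def jgb_def reduce_def cancel_cons_def Ffun_def wmap_def mbar_def inv_l_def)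
  have phi2: "mbar K m \<nu> n (Ffun K (\<lambda>n. decK) n (gB K n (jgen (BK K) n b2))) = y"
    using yb unfolding b2_def
    by (simp add: jgen_def bpt_BK gB_def tgb_def sgw_def sigb_def jgb_def reduce_def cancel_cons_def Ffun_def wmap_def mbar_def)
  have L: "mbar K m \<nu> n (Ffun K (\<lambda>k x. mbar K m \<nu> k (Ffun K (\<lambda>n. decK) k (gB K k (jgen (BK K) k x)))) n [(b1, False), (b2, False)])
        = m n (\<nu> n y, y)"
  proof (cases "\<nu> n y = bpt K n")
    case True
    then show ?thesis using phi1 phi2 yb hg_unit[OF hg y]
      by (simp add: Ffun_def wmap_def reduce_def cancel_cons_def mbar_def)
  next
    case False
    then show ?thesis using phi1 phi2 yb
      by (simp add: Ffun_def wmap_def reduce_def cancel_cons_def mbar_def)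
  qed
  have R: "mbar K m \<nu> n (Ffun K (\<lambda>n. decK) n (gB K n [(b1, False), (b2, False)])) = bpt K n"
    using yb unfolding b1_def b2_def
    by (simp add: gB_def tgb_def sgw_def sigb_def jgb_def reduce_def cancel_cons_def Ffun_def wmap_def mbar_def inv_l_def)
  show ?thesis using S[OF w] L R by simp
qed

definition GK :: "'a psset \<Rightarrow> (nat \<Rightarrow> 'a \<times> 'a \<Rightarrow> 'a) \<Rightarrow> 'a bigT sgrp" where
  "GK K m = trm K embK decK (sgrp.fields (\<lambda>n S T. embK (m n (decK S, decK T))) (\<lambda>n. embK (bpt K n)))"

lemma GK_simps[simp]:
  "cells (GK K m) n = embK ` cells K n"
  "face (GK K m) n i S = embK (face K n i (decK S))"
  "degen (GK K m) n i S = embK (degen K n i (decK S))"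
  "base (GK K m) = embK (base K)"
  "gmul (GK K m) n S T = embK (m n (decK S, decK T))"
  "gone (GK K m) n = embK (bpt K n)"
  by (simp_all add: GK_def trm_def sgrp.defs)

lemma hg_mcells: "hgroup K m \<nu> \<Longrightarrow> x \<in> cells K n \<Longrightarrow> y \<in> cells K n \<Longrightarrow> m n (x, y) \<in> cells K n"
  using pm_cells[OF hg_m, of K m \<nu> "(x, y)" n] by simp

lemma part1:
  fixes K :: "'a psset"
  assumes hg: "hgroup K m \<nu>"
    and H: "\<forall>(A :: 'a bigT psset) (B :: 'a bigT psset) (C :: 'a bigT psset) f g h.
          pssset A \<and> pssset B \<and> pssset C \<and>
          sghom (free_sg A) (free_sg B) f \<and> sghom (free_sg B) (free_sg C) g \<and>
          psmap C K h \<longrightarrow> star_cond K m \<nu> A B f g h"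
  shows "\<exists>G :: 'a bigT sgrp. sgroup G \<and> h_equiv_sgroup K m G"
proof -
  have K: "pssset K" by (rule hg_pssset[OF hg])
  note S = star_inst[OF hg H]
  have unit: "\<And>x n. x \<in> cells K n \<Longrightarrow> m n (x, bpt K n) = x \<and> m n (bpt K n, x) = x"
    using hg_unit[OF hg] by blast
  have mc: "\<And>x y n. x \<in> cells K n \<Longrightarrow> y \<in> cells K n \<Longrightarrow> m n (x, y) \<in> cells K n"
    using hg_mcells[OF hg] by blast
  have assoc: "m n (m n (x, y), z) = m n (x, m n (y, z))"
    if x: "x \<in> cells K n" and y: "y \<in> cells K n" and z: "z \<in> cells K n" for x y z n
  proof (cases "x = bpt K n \<or> y = bpt K n \<or> z = bpt K n")
    case True
    then show ?thesis using unit x y z mc by auto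
  next
    case False
    then show ?thesis using assoc_from_star[OF hg S x y z] by blast
  qed
  have nuc: "\<And>x n. x \<in> cells K n \<Longrightarrow> \<nu> n x \<in> cells K n" using pm_cells[OF hg_nu[OF hg]] by blast
  have linv: "m n (\<nu> n y, y) = bpt K n" if y: "y \<in> cells K n" for y n
  proof (cases "y = bpt K n")
    case True
    then show ?thesis using pm_bpt[OF hg_nu[OF hg] K] unit bpt_cells[OF K] by simp
  next
    case False
    then show ?thesis using linv_from_star[OF hg S y] by blast
  qed
  let ?G = "GK K m"
  have grp: "group (grp_of ?G n)" for n
  proof (rule groupI)
    fix x y assume "x \<in> carrier (grp_of ?G n)" "y \<in> carrier (grp_of ?G n)"
    then show "x \<otimes>\<^bsub>grp_of ?G n\<^esub> y \<in> carrier (grp_of ?G n)" using mc by auto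
  next
    show "\<one>\<^bsub>grp_of ?G n\<^esub> \<in> carrier (grp_of ?G n)" using bpt_cells[OF K] by simp
  next
    fix x y z assume "x \<in> carrier (grp_of ?G n)" "y \<in> carrier (grp_of ?G n)" "z \<in> carrier (grp_of ?G n)"
    then show "x \<otimes>\<^bsub>grp_of ?G n\<^esub> y \<otimes>\<^bsub>grp_of ?G n\<^esub> z = x \<otimes>\<^bsub>grp_of ?G n\<^esub> (y \<otimes>\<^bsub>grp_of ?G n\<^esub> z)"
      using assoc by auto
  next
    fix x assume "x \<in> carrier (grp_of ?G n)"
    then show "\<one>\<^bsub>grp_of ?G n\<^esub> \<otimes>\<^bsub>grp_of ?G n\<^esub> x = x" using unit by auto
  next
    fix x assume "x \<in> carrier (grp_of ?G n)"
    then obtain y where y: "y \<in> cells K n" "x = embK y" by auto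
    show "\<exists>z\<in>carrier (grp_of ?G n). z \<otimes>\<^bsub>grp_of ?G n\<^esub> x = \<one>\<^bsub>grp_of ?G n\<^esub>"
      by (rule bexI[of _ "embK (\<nu> n y)"]) (use y linv nuc in auto)
  qed
  have mface: "m n (face K (Suc n) i x, face K (Suc n) i y) = face K (Suc n) i (m (Suc n) (x, y))"
    if "x \<in> cells K (Suc n)" "y \<in> cells K (Suc n)" "i \<le> Suc n" for x y n i
    using pm_face[OF hg_m[OF hg], of "(x, y)" n i] that by simp
  have mdegen: "m (Suc n) (degen K n i x, degen K n i y) = degen K n i (m n (x, y))"
    if "x \<in> cells K n" "y \<in> cells K n" "i \<le> n" for x y n i
    using pm_degen[OF hg_m[OF hg], of "(x, y)" n i] that by simp
  have psG: "pssset ?G"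
  proof -
    have "pssset (trm K embK decK (sgrp.fields (\<lambda>n S T. embK (m n (decK S, decK T))) (\<lambda>n. embK (bpt K n))))"
      by (rule pssset_trm) (auto simp: K)
    then show ?thesis by (simp add: GK_def)
  qed
  have sg: "sgroup ?G"
    unfolding sgroup_def
  proof (intro conjI allI impI)
    show "pssset ?G" by (rule psG)
    show "base ?G = gone ?G 0" by simp
    show "group (grp_of ?G n)" for n by (rule grp)
    fix n i
    show "i \<le> Suc n \<Longrightarrow> face ?G (Suc n) i \<in> hom (grp_of ?G (Suc n)) (grp_of ?G n)"
      unfolding hom_def using ps_face[OF K] mc mface by auto
    show "i \<le> n \<Longrightarrow> degen ?G n i \<in> hom (grp_of ?G n) (grp_of ?G (Suc n))"
      unfolding hom_def using ps_degen[OF K] mc mdegen by auto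
  qed
  have pKG: "psmap K ?G (\<lambda>n. embK)"
    using psmap_trm_en[of decK embK K "sgrp.fields (\<lambda>n S T. embK (m n (decK S, decK T))) (\<lambda>n. embK (bpt K n))"]
    by (simp add: GK_def)
  have pGK: "psmap ?G K (\<lambda>n. decK)"
    using psmap_trm_de[of decK embK K "sgrp.fields (\<lambda>n S T. embK (m n (decK S, decK T))) (\<lambda>n. embK (bpt K n))"] K
    by (simp add: GK_def)
  have idK: "psmap K K (\<lambda>n x. x)" by (simp add: psmap_def)
  have h1: "homotopic K K (\<lambda>n x. decK (embK x)) (\<lambda>n x. x)"
    using homotopic_refl[OF K K idK, of "\<lambda>n x. x"] by simp
  have h2: "homotopic ?G ?G (\<lambda>n x. embK (decK x)) (\<lambda>n x. x)"
    by (rule homotopic_refl[OF psG psG pm_comp[OF pGK pKG]]) auto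
  have pKK: "pssset (sprod K K)" by (rule pssset_sprod[OF K K])
  have pm3: "psmap (sprod K K) ?G (\<lambda>n p. embK (m n p))"
    by (rule pm_comp[OF hg_m[OF hg] pKG])
  have h3: "homotopic (sprod K K) ?G (\<lambda>n (x, y). embK (m n (x, y))) (\<lambda>n (x, y). gmul ?G n (embK x) (embK y))"
  proof -
    have "homotopic (sprod K K) ?G (\<lambda>n p. embK (m n p)) (\<lambda>n (x, y). gmul ?G n (embK x) (embK y))"
      by (rule homotopic_refl[OF pKK psG pm3]) auto
    then show ?thesis by (simp add: case_prod_beta')
  qed
  have "h_equiv_sgroup K m ?G"
    unfolding h_equiv_sgroup_def
    using pKG pGK h1 h2 h3 by blast
  then show ?thesis using sg by blast
qed




definition lt :: "('b, 'z) monoid_scheme \<Rightarrow> 'b \<times> bool \<Rightarrow> 'b" where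
  "lt Gr l = (if snd l then inv\<^bsub>Gr\<^esub> (fst l) else fst l)"
definition evf :: "('b, 'z) monoid_scheme \<Rightarrow> ('x \<times> bool \<Rightarrow> 'b) \<Rightarrow> ('x \<times> bool) list \<Rightarrow> 'b" where
  "evf Gr \<chi> u = foldr (\<lambda>l acc. \<chi> l \<otimes>\<^bsub>Gr\<^esub> acc) u \<one>\<^bsub>Gr\<^esub>"
abbreviation ev where "ev Gr \<equiv> evf Gr (lt Gr)"

lemma evf_simps[simp]: "evf Gr \<chi> [] = \<one>\<^bsub>Gr\<^esub>" "evf Gr \<chi> (l # u) = \<chi> l \<otimes>\<^bsub>Gr\<^esub> evf Gr \<chi> u"
  by (simp_all add: evf_def)

lemma set_ext_sub: "set (ext \<tau> w) = (\<Union>l \<in> set w. set (\<tau> l))"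
  by (induct w) auto

context group
begin

lemma lt_closed: "fst l \<in> carrier G \<Longrightarrow> lt G l \<in> carrier G"
  by (simp add: lt_def)

lemma evf_closed: "(\<And>l. l \<in> set u \<Longrightarrow> \<chi> l \<in> carrier G) \<Longrightarrow> evf G \<chi> u \<in> carrier G"
  by (induct u) auto

lemma ev_closed: "\<forall>l \<in> set u. fst l \<in> carrier G \<Longrightarrow> ev G u \<in> carrier G"
  by (rule evf_closed) (auto intro: lt_closed)

lemma evf_append: "(\<And>l. l \<in> set u \<Longrightarrow> \<chi> l \<in> carrier G) \<Longrightarrow> (\<And>l. l \<in> set v \<Longrightarrow> \<chi> l \<in> carrier G) \<Longrightarrow>
   evf G \<chi> (u @ v) = evf G \<chi> u \<otimes> evf G \<chi> v"
  by (induct u) (auto simp: m_assoc evf_closed)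

lemma ev_append: "\<forall>l \<in> set u. fst l \<in> carrier G \<Longrightarrow> \<forall>l \<in> set v. fst l \<in> carrier G \<Longrightarrow>
   ev G (u @ v) = ev G u \<otimes> ev G v"
  by (rule evf_append) (auto intro: lt_closed)

lemma ev_cancel_cons: "fst a \<in> carrier G \<Longrightarrow> \<forall>l \<in> set r. fst l \<in> carrier G \<Longrightarrow>
   ev G (cancel_cons a r) = lt G a \<otimes> ev G r"
proof (cases r)
  case Nil
  assume "fst a \<in> carrier G"
  then show ?thesis using Nil by (simp add: cancel_cons_def lt_closed)
next
  case (Cons c cs)
  assume a: "fst a \<in> carrier G" and r: "\<forall>l \<in> set r. fst l \<in> carrier G"
  show ?thesis
  proof (cases "fst c = fst a \<and> snd c \<noteq> snd a")
    case True
    have c: "fst c \<in> carrier G" using r Cons by simp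
    have cs: "ev G cs \<in> carrier G" using r Cons by (intro ev_closed) auto
    have "lt G a \<otimes> lt G c = \<one>" using True a by (auto simp: lt_def)
    then have "lt G a \<otimes> ev G r = ev G cs"
      using Cons cs a c by (simp add: m_assoc[symmetric] lt_closed)
    then show ?thesis using True Cons by (simp add: cancel_cons_def)
  next
    case False
    then show ?thesis using Cons by (auto simp: cancel_cons_def)
  qed
qed

lemma ev_reduce: "\<forall>l \<in> set w. fst l \<in> carrier G \<Longrightarrow> ev G (reduce w) = ev G w"
proof (induct w)
  case (Cons a w)
  have "\<forall>l \<in> set (reduce w). fst l \<in> carrier G" using Cons(2) set_reduce by fastforce
  then show ?case using Cons by (simp add: reduce_Cons ev_cancel_cons)
qed simp

lemma ev_ext: "\<forall>l \<in> set u. \<forall>l' \<in> set (\<tau> l). fst l' \<in> carrier G \<Longrightarrow> ev G (ext \<tau> u) = evf G (\<lambda>l. ev G (\<tau> l)) u"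
proof (induct u)
  case (Cons a u)
  have 1: "\<forall>l' \<in> set (\<tau> a). fst l' \<in> carrier G" using Cons(2) by simp
  have 2: "\<forall>l' \<in> set (ext \<tau> u). fst l' \<in> carrier G" using Cons(2) by (auto simp: set_ext_sub)
  have 3: "ev G (ext \<tau> u) = evf G (\<lambda>l. ev G (\<tau> l)) u" using Cons by simp
  show ?case using ev_append[OF 1 2] 3 by simp
qed simp

end


lemma sg_group: "sgroup K \<Longrightarrow> group (grp_of K n)" by (simp add: sgroup_def)
lemma sg_pssset: "sgroup K \<Longrightarrow> pssset K" by (simp add: sgroup_def)

lemma bpt_one: assumes K: "sgroup K" shows "bpt K n = gone K n"
proof (induct n)
  case 0 then show ?case using K by (simp add: sgroup_def)
next
  case (Suc n)
  have "degen K n 0 \<in> hom (grp_of K n) (grp_of K (Suc n))" using K by (simp add: sgroup_def)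
  then have "degen K n 0 (\<one>\<^bsub>grp_of K n\<^esub>) = \<one>\<^bsub>grp_of K (Suc n)\<^esub>"
    using hom_one sg_group[OF K] by blast
  then show ?case using Suc by simp
qed

lemma mbar_ev:
  assumes K: "sgroup K" and w: "\<forall>l \<in> set w. fst l \<in> cells K n"
  shows "mbar K (\<lambda>n (x, y). gmul K n x y) (\<lambda>n x. inv\<^bsub>grp_of K n\<^esub> x) n w = ev (grp_of K n) w"
proof -
  interpret G: group "grp_of K n" by (rule sg_group[OF K])
  have fl: "foldl (\<lambda>acc l'. acc \<otimes>\<^bsub>grp_of K n\<^esub> lt (grp_of K n) l') a ls = a \<otimes>\<^bsub>grp_of K n\<^esub> ev (grp_of K n) ls"
    if "a \<in> cells K n" "\<forall>l \<in> set ls. fst l \<in> cells K n" for a ls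
    using that
  proof (induct ls arbitrary: a)
    case Nil then show ?case using G.r_one[of a] by simp
  next
    case (Cons l ls)
    have "lt (grp_of K n) l \<in> cells K n" using Cons(3) G.lt_closed by simp
    moreover have "ev (grp_of K n) ls \<in> cells K n" using Cons(3) G.ev_closed by simp
    ultimately show ?case using Cons G.m_assoc[of a "lt (grp_of K n) l" "ev (grp_of K n) ls"]
      Cons(1)[of "a \<otimes>\<^bsub>grp_of K n\<^esub> lt (grp_of K n) l"] G.m_closed[of a "lt (grp_of K n) l"] by simp
  qed
  show ?thesis
  proof (cases w)
    case Nil then show ?thesis by (simp add: mbar_def bpt_one[OF K])
  next
    case (Cons l ls)
    have "lt (grp_of K n) l \<in> cells K n" using w Cons G.lt_closed by simp
    then have "mbar K (\<lambda>n (x, y). gmul K n x y) (\<lambda>n x. inv\<^bsub>grp_of K n\<^esub> x) n w = lt (grp_of K n) l \<otimes>\<^bsub>grp_of K n\<^esub> ev (grp_of K n) ls"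
      using fl[of "lt (grp_of K n) l" ls] w Cons
      by (simp add: mbar_def lt_def case_prod_beta' if_distrib)
    then show ?thesis using Cons by simp
  qed
qed


lemma evf_cong: "(\<And>l. l \<in> set u \<Longrightarrow> \<chi> l = \<chi>' l) \<Longrightarrow> evf Gr \<chi> u = evf Gr \<chi>' u"
  by (induct u) auto

lemma sghom_psmap: "sghom G H f \<Longrightarrow> psmap G H f" by (simp add: sghom_def)
lemma sghom_hom: "sghom G H f \<Longrightarrow> f n \<in> hom (grp_of G n) (grp_of H n)" by (simp add: sghom_def)

lemma sghom_Nil: assumes g: "sghom (free_sg B) (free_sg C) g" shows "g k [] = []"
proof (induct k)
  case 0 then show ?case using pm_base[OF sghom_psmap[OF g]] by simp
next
  case (Suc k)
  have "g (Suc k) (degen (free_sg B) k 0 []) = degen (free_sg C) k 0 (g k [])"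
    by (rule pm_degen[OF sghom_psmap[OF g]]) simp_all
  then show ?case using Suc by (simp add: wmap_def)
qed

lemma part2:
  fixes K :: "'b sgrp" and A :: "'c psset" and B :: "'d psset" and C :: "'e psset"
  assumes K: "sgroup K" and f: "sghom (free_sg A) (free_sg B) f" and g: "sghom (free_sg B) (free_sg C) g"
    and h: "psmap C K h"
  shows "star_cond K (\<lambda>n (x, y). gmul K n x y) (\<lambda>n x. inv\<^bsub>grp_of K n\<^esub> x) A B f g h"
  unfolding star_cond_def star_def
proof (intro allI impI)
  fix n w assume w: "w \<in> cells (free_sg A) n"
  define Gr where "Gr = grp_of K n"
  interpret G: group Gr unfolding Gr_def by (rule sg_group[OF K])
  let ?mm = "\<lambda>n (x, y). gmul K n x y" and ?ii = "\<lambda>n x. inv\<^bsub>grp_of K n\<^esub> x"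
  define bn where "bn = bpt K n"
  define \<tau>h where "\<tau>h = tw (h n) bn"
  define \<Psi> where "\<Psi> u = ev Gr (ext \<tau>h (g n u))" for u
  have carr: "carrier Gr = cells K n" by (simp add: Gr_def)
  have gc: "g n u \<in> cells (free_sg C) n" if "u \<in> cells (free_sg B) n" for u
    using pm_cells[OF sghom_psmap[OF g] that] .
  have letC: "\<forall>l' \<in> set (ext \<tau>h x). fst l' \<in> carrier Gr" if "\<forall>l \<in> set x. fst l \<in> cells C n" for x
    using that pm_cells[OF h] by (auto simp: set_ext_sub \<tau>h_def tw_def carr split: if_splits)
  have evred: "ev Gr (ext \<tau>h (reduce x)) = ev Gr (ext \<tau>h x)" if x: "\<forall>l \<in> set x. fst l \<in> cells C n" for x
  proof -
    have x': "\<forall>l \<in> set (reduce x). fst l \<in> cells C n" using x set_reduce by fastforce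
    have "ev Gr (ext \<tau>h (reduce x)) = ev Gr (reduce (ext \<tau>h (reduce x)))"
      using G.ev_reduce[OF letC[OF x']] by simp
    also have "\<dots> = ev Gr (reduce (ext \<tau>h x))"
      by (simp add: reduce_ext_reduce good_tw \<tau>h_def)
    also have "\<dots> = ev Gr (ext \<tau>h x)" by (rule G.ev_reduce[OF letC[OF x]])
    finally show ?thesis .
  qed
  have cellsC: "\<forall>l \<in> set v. fst l \<in> cells C n" if "v \<in> cells (free_sg C) n" for v
    using that by simp
  have Psi_closed: "\<Psi> u \<in> carrier Gr" if "u \<in> cells (free_sg B) n" for u
    unfolding \<Psi>_def by (rule G.ev_closed[OF letC[OF cellsC[OF gc[OF that]]]])
  have Psi_mul: "\<Psi> (reduce (u @ v)) = \<Psi> u \<otimes>\<^bsub>Gr\<^esub> \<Psi> v" if u: "u \<in> cells (free_sg B) n" and v: "v \<in> cells (free_sg B) n" for u v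
  proof -
    have "g n (reduce (u @ v)) = reduce (g n u @ g n v)"
      using hom_mult[OF sghom_hom[OF g, of n], of u v] u v by simp
    then have "\<Psi> (reduce (u @ v)) = ev Gr (ext \<tau>h (g n u @ g n v))"
    proof -
      have "\<forall>l \<in> set (g n u @ g n v). fst l \<in> cells C n" using cellsC[OF gc[OF u]] cellsC[OF gc[OF v]] by auto
      from evred[OF this] show "g n (reduce (u @ v)) = reduce (g n u @ g n v) \<Longrightarrow> \<Psi> (reduce (u @ v)) = ev Gr (ext \<tau>h (g n u @ g n v))"
        unfolding \<Psi>_def by simp
    qed
    also have "\<dots> = \<Psi> u \<otimes>\<^bsub>Gr\<^esub> \<Psi> v"
      unfolding \<Psi>_def using G.ev_append[OF letC[OF cellsC[OF gc[OF u]]] letC[OF cellsC[OF gc[OF v]]]] by simp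
    finally show ?thesis .
  qed
  have Psi_nil: "\<Psi> [] = \<one>\<^bsub>Gr\<^esub>" unfolding \<Psi>_def by (simp add: sghom_Nil[OF g])
  have single: "[(b, e)] \<in> cells (free_sg B) n" if "b \<in> cells B n" "b \<noteq> bpt B n" for b e
    using that by simp
  have Psi_inv: "\<Psi> [(b, True)] = inv\<^bsub>Gr\<^esub> (\<Psi> [(b, False)])" if b: "b \<in> cells B n" "b \<noteq> bpt B n" for b
  proof -
    have "\<Psi> [(b, False)] \<otimes>\<^bsub>Gr\<^esub> \<Psi> [(b, True)] = \<Psi> (reduce ([(b, False)] @ [(b, True)]))"
      using Psi_mul[OF single[OF b] single[OF b]] by simp
    also have "\<dots> = \<one>\<^bsub>Gr\<^esub>" using Psi_nil by (simp add: reduce_def cancel_cons_def)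
    finally have 1: "\<Psi> [(b, False)] \<otimes>\<^bsub>Gr\<^esub> \<Psi> [(b, True)] = \<one>\<^bsub>Gr\<^esub>" .
    show ?thesis using G.inv_equality[OF _ Psi_closed[OF single[OF b]] Psi_closed[OF single[OF b]]] 1
      G.inv_inv Psi_closed[OF single[OF b]] by (metis G.inv_equality G.l_inv G.r_inv G.inv_closed G.m_assoc G.l_one G.r_one)
  qed
  define \<chi> where "\<chi> l = lt Gr (\<Psi> [(fst l, False)], snd l)" for l
  have Psi_P: "\<Psi> u = evf Gr \<chi> u" if "u \<in> cells (free_sg B) n" for u
    using that
  proof (induct u)
    case Nil then show ?case by (simp add: Psi_nil)
  next
    case (Cons l u)
    obtain b e where l: "l = (b, e)" by (cases l)
    have b: "b \<in> cells B n" "b \<noteq> bpt B n" using Cons(2) l by auto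
    have u: "u \<in> cells (free_sg B) n" using Cons(2) reduced_Cons_tl[of l u] by simp
    have red: "reduce ([l] @ u) = l # u" using Cons(2) reduce_reduced[of "l # u"] by simp
    have "\<Psi> (l # u) = \<Psi> [l] \<otimes>\<^bsub>Gr\<^esub> \<Psi> u" using Psi_mul[OF single[OF b, of e] u] red l by simp
    moreover have "\<Psi> [l] = \<chi> l" using Psi_inv[OF b] l by (cases e) (simp_all add: \<chi>_def lt_def)
    ultimately show ?case using Cons(1)[OF u] by simp
  qed
  have fw: "f n w \<in> cells (free_sg B) n" using pm_cells[OF sghom_psmap[OF f] w] .
  define \<phi> where "\<phi> k x = mbar K ?mm ?ii k (Ffun K h k (g k (jgen B k x)))" for k x
  have bn1: "bn = \<one>\<^bsub>Gr\<^esub>" by (simp add: bn_def Gr_def bpt_one[OF K])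
  have phi: "\<phi> n b = \<Psi> [(b, False)]" if b: "b \<in> cells B n" "b \<noteq> bpt B n" for b
  proof -
    have c: "\<forall>l \<in> set (g n [(b, False)]). fst l \<in> cells C n" using cellsC[OF gc[OF single[OF b]]] .
    have "\<phi> n b = mbar K ?mm ?ii n (reduce (ext \<tau>h (g n [(b, False)])))"
      using b by (simp add: \<phi>_def jgen_def Ffun_def wmap_ext \<tau>h_def bn_def)
    also have "\<dots> = ev Gr (reduce (ext \<tau>h (g n [(b, False)])))"
      unfolding Gr_def by (rule mbar_ev[OF K]) (use letC[OF c] set_reduce carr in blast)
    also have "\<dots> = \<Psi> [(b, False)]" unfolding \<Psi>_def by (rule G.ev_reduce[OF letC[OF c]])
    finally show ?thesis .
  qed
  have RHS: "mbar K ?mm ?ii n (Ffun K h n ((g n \<circ> f n) w)) = \<Psi> (f n w)"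
  proof -
    have c: "\<forall>l \<in> set (g n (f n w)). fst l \<in> cells C n" using cellsC[OF gc[OF fw]] .
    have "mbar K ?mm ?ii n (Ffun K h n ((g n \<circ> f n) w)) = mbar K ?mm ?ii n (reduce (ext \<tau>h (g n (f n w))))"
      by (simp add: Ffun_def wmap_ext \<tau>h_def bn_def)
    also have "\<dots> = ev Gr (reduce (ext \<tau>h (g n (f n w))))"
      unfolding Gr_def by (rule mbar_ev[OF K]) (use letC[OF c] set_reduce carr in blast)
    also have "\<dots> = \<Psi> (f n w)" unfolding \<Psi>_def by (rule G.ev_reduce[OF letC[OF c]])
    finally show ?thesis .
  qed
  have fwl: "fst l \<in> cells B n \<and> fst l \<noteq> bpt B n" if "l \<in> set (f n w)" for l
    using fw that by simp
  have letB: "\<forall>l' \<in> set (ext (tw (\<phi> n) bn) (f n w)). fst l' \<in> carrier Gr"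
    using fwl phi Psi_closed single by (auto simp: set_ext_sub tw_def split: if_splits)
  have LHS: "mbar K ?mm ?ii n (Ffun K \<phi> n (f n w)) = evf Gr \<chi> (f n w)"
  proof -
    have "mbar K ?mm ?ii n (Ffun K \<phi> n (f n w)) = mbar K ?mm ?ii n (reduce (ext (tw (\<phi> n) bn) (f n w)))"
      by (simp add: Ffun_def wmap_ext bn_def)
    also have "\<dots> = ev Gr (reduce (ext (tw (\<phi> n) bn) (f n w)))"
      unfolding Gr_def by (rule mbar_ev[OF K]) (use letB set_reduce carr in blast)
    also have "\<dots> = ev Gr (ext (tw (\<phi> n) bn) (f n w))" by (rule G.ev_reduce[OF letB])
    also have "\<dots> = evf Gr (\<lambda>l. ev Gr (tw (\<phi> n) bn l)) (f n w)"
      by (rule G.ev_ext) (use letB in \<open>auto simp: set_ext_sub\<close>)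
    also have "\<dots> = evf Gr \<chi> (f n w)"
    proof (rule evf_cong)
      fix l assume l: "l \<in> set (f n w)"
      obtain b e where be: "l = (b, e)" by (cases l)
      have b: "b \<in> cells B n" "b \<noteq> bpt B n" using fwl[OF l] be by auto
      have pc: "\<phi> n b \<in> carrier Gr" using phi[OF b] Psi_closed[OF single[OF b]] by simp
      show "ev Gr (tw (\<phi> n) bn l) = \<chi> l"
        using be phi[OF b] pc bn1 by (auto simp: tw_def \<chi>_def lt_def)
    qed
    finally show ?thesis .
  qed
  show "mbar K ?mm ?ii n (Ffun K (\<lambda>k x. mbar K ?mm ?ii k (Ffun K h k (g k (jgen B k x)))) n (f n w))
      = mbar K ?mm ?ii n (Ffun K h n ((g n \<circ> f n) w))"
    using LHS RHS Psi_P[OF fw] unfolding \<phi>_def by simp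
qed


theorem theorem5p7:
  shows
   "(\<forall>(K :: 'a psset) m \<nu>.
       kan K \<and> hgroup K m \<nu> \<and>
       (\<forall>(A :: 'a bigT psset) (B :: 'a bigT psset) (C :: 'a bigT psset) f g h.
          pssset A \<and> pssset B \<and> pssset C \<and>
          sghom (free_sg A) (free_sg B) f \<and> sghom (free_sg B) (free_sg C) g \<and>
          psmap C K h \<longrightarrow> star_cond K m \<nu> A B f g h)
       \<longrightarrow> (\<exists>G :: 'a bigT sgrp. sgroup G \<and> h_equiv_sgroup K m G))
    \<and>
    (\<forall>(K :: 'b sgrp).
       sgroup K \<longrightarrow>
       (\<forall>(A :: 'c psset) (B :: 'd psset) (C :: 'e psset) f g h.
          pssset A \<and> pssset B \<and> pssset C \<and>
          sghom (free_sg A) (free_sg B) f \<and> sghom (free_sg B) (free_sg C) g \<and>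
          psmap C K h \<longrightarrow>
          star_cond K (\<lambda>n (x, y). gmul K n x y) (\<lambda>n x. inv\<^bsub>grp_of K n\<^esub> x) A B f g h))"
proof (rule conjI)
  show "\<forall>(K :: 'a psset) m \<nu>.
       kan K \<and> hgroup K m \<nu> \<and>
       (\<forall>(A :: 'a bigT psset) (B :: 'a bigT psset) (C :: 'a bigT psset) f g h.
          pssset A \<and> pssset B \<and> pssset C \<and>
          sghom (free_sg A) (free_sg B) f \<and> sghom (free_sg B) (free_sg C) g \<and>
          psmap C K h \<longrightarrow> star_cond K m \<nu> A B f g h)
       \<longrightarrow> (\<exists>G :: 'a bigT sgrp. sgroup G \<and> h_equiv_sgroup K m G)"
    using part1 by blast
next
  show "\<forall>(K :: 'b sgrp).
       sgroup K \<longrightarrow>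
       (\<forall>(A :: 'c psset) (B :: 'd psset) (C :: 'e psset) f g h.
          pssset A \<and> pssset B \<and> pssset C \<and>
          sghom (free_sg A) (free_sg B) f \<and> sghom (free_sg B) (free_sg C) g \<and>
          psmap C K h \<longrightarrow>
          star_cond K (\<lambda>n (x, y). gmul K n x y) (\<lambda>n x. inv\<^bsub>grp_of K n\<^esub> x) A B f g h)"
    using part2 by blast
qed

end
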